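(* Let $(\mathcal{X},\mathcal{B}_{\mathcal{X}})$, $(\mathcal{Y},\mathcal{B}_{\mathcal{Y}})$, $(\Omega,\mathcal{F})$ be measurable spaces and $(\mu^\omega)_{\omega\in\Omega}$, $(\nu^\omega)_{\omega\in\Omega}$ regular families of measures on $\mathcal{X}$, $\mathcal{Y}$ respectively. For each $\omega$ let $\mathcal{A}^\omega:L^2(\mathcal{X},\mathcal{B}_{\mathcal{X}},\mu^\omega)\to L^2(\mathcal{Y},\mathcal{B}_{\mathcal{Y}},\nu^\omega)$ be a bounded linear operator. Assume: 1) there are measurable $f_n:\mathcal{X}\to\mathbb{R}$, $k_n:\mathcal{Y}\to\mathbb{R}$ ($n\ge1$) such that for every $\omega$, $(f_n)$ is total in $L^2(\mathcal{X},\mathcal{B}_{\mathcal{X}},\mu^\omega)$ and $(k_n)$ is total in $L^2(\mathcal{Y},\mathcal{B}_{\mathcal{Y}},\nu^\omega)$; 2) for each $n$, the family $\{\mathcal{A}^\omega f_n\}_{\omega\in\Omega}$ can be realized as a measurable function on $\mathcal{Y}\times\Omega$ w.r.t. $\{\nu^\omega\}$. Then for every measurable $g:\mathcal{X}\times\Omega\to\mathbb{R}$ with $g(\cdot,\omega)\in L^2(\mathcal{X},\mathcal{B}_{\mathcal{X}},\mu^\omega)$ for all $\omega$, the family $\{\mathcal{A}^\omega(g(\cdot,\omega))\}_{\omega\in\Omega}$ can be realized as a measurable function on $\mathcal{Y}\times\Omega$ w.r.t. $\{\nu^\omega\}$.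
   Context: A regular family of measures $(\mu^\omega)_{\omega\in\Omega}$ on $(\mathcal{X},\mathcal{B})$ is a map $(B,\omega)\mapsto\mu^\omega(B)\in[0,\infty]$ such that each $\mu^\omega$ is a (possibly infinite) measure and $\omega\mapsto\mu^\omega(B)$ is $\mathcal{F}$-measurable for every $B\in\mathcal{B}$. A family $\{\xi^\omega\}_{\omega\in\Omega}$ of measurable functions on $\mathcal{Y}$ "can be realized as a measurable function on $\mathcal{Y}\times\Omega$ w.r.t. $\{\nu^\omega\}$" if there is a measurable $h:\mathcal{Y}\times\Omega\to\mathbb{R}$ with $h(\cdot,\omega)=\xi^\omega$ $\nu^\omega$-a.e. for every $\omega$. *)

theory Defs
  imports "HOL-Analysis.Analysis"
begin

text \<open>Real square-integrable functions on a (possibly infinite) measure space.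
  L^2 is modelled on representatives; everything below respects a.e. equality.\<close>
definition L2 :: "'a measure \<Rightarrow> ('a \<Rightarrow> real) \<Rightarrow> bool" where
  "L2 M f \<longleftrightarrow> f \<in> borel_measurable M \<and> integrable M (\<lambda>x. (f x)\<^sup>2)"

definition L2norm :: "'a measure \<Rightarrow> ('a \<Rightarrow> real) \<Rightarrow> real" where
  "L2norm M f = sqrt (\<integral>x. (f x)\<^sup>2 \<partial>M)"

definition bounded_linear_L2 ::
  "'a measure \<Rightarrow> 'b measure \<Rightarrow> (('a \<Rightarrow> real) \<Rightarrow> ('b \<Rightarrow> real)) \<Rightarrow> bool" where
  "bounded_linear_L2 M N A \<longleftrightarrow>
     (\<forall>f. L2 M f \<longrightarrow> L2 N (A f)) \<and>
     (\<forall>f g. L2 M f \<longrightarrow> L2 M g \<longrightarrow> (AE x in M. f x = g x) \<longrightarrow> (AE y in N. A f y = A g y)) \<and>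
     (\<forall>f g a b. L2 M f \<longrightarrow> L2 M g \<longrightarrow>
        (AE y in N. A (\<lambda>x. a * f x + b * g x) y = a * A f y + b * A g y)) \<and>
     (\<exists>C. \<forall>f. L2 M f \<longrightarrow> L2norm N (A f) \<le> C * L2norm M f)"

definition total_L2 :: "'a measure \<Rightarrow> (nat \<Rightarrow> 'a \<Rightarrow> real) \<Rightarrow> bool" where
  "total_L2 M fs \<longleftrightarrow> (\<forall>n. L2 M (fs n)) \<and>
     (\<forall>g. L2 M g \<longrightarrow> (\<forall>\<epsilon>>0. \<exists>m c. L2norm M (\<lambda>x. g x - (\<Sum>i<m. c i * fs i x)) < \<epsilon>))"

definition regular_family :: "'w measure \<Rightarrow> 'a measure \<Rightarrow> ('w \<Rightarrow> 'a measure) \<Rightarrow> bool" where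
  "regular_family \<Omega> X \<mu> \<longleftrightarrow> (\<forall>\<omega>\<in>space \<Omega>. sets (\<mu> \<omega>) = sets X) \<and>
     (\<forall>B\<in>sets X. (\<lambda>\<omega>. emeasure (\<mu> \<omega>) B) \<in> borel_measurable \<Omega>)"

definition realizable :: "'w measure \<Rightarrow> 'b measure \<Rightarrow> ('w \<Rightarrow> 'b measure) \<Rightarrow> ('w \<Rightarrow> 'b \<Rightarrow> real) \<Rightarrow> bool" where
  "realizable \<Omega> Y \<nu> \<xi> \<longleftrightarrow> (\<exists>h \<in> borel_measurable (Y \<Otimes>\<^sub>M \<Omega>).
     \<forall>\<omega>\<in>space \<Omega>. AE y in \<nu> \<omega>. h (y, \<omega>) = \<xi> \<omega> y)"

end

theory Submission
  imports Defs "HOL-Probability.Probability"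
begin

lemma L2_zero: "L2 M (\<lambda>x. 0)"
  unfolding L2_def by simp

lemma L2_lin:
  assumes "L2 M f" "L2 M g"
  shows "L2 M (\<lambda>x. a * f x + b * g x)"
proof -
  have [measurable]: "f \<in> borel_measurable M" "g \<in> borel_measurable M"
    and i: "integrable M (\<lambda>x. (f x)\<^sup>2)" "integrable M (\<lambda>x. (g x)\<^sup>2)"
    using assms by (auto simp: L2_def)
  have int: "integrable M (\<lambda>x. 2 * a\<^sup>2 * (f x)\<^sup>2 + 2 * b\<^sup>2 * (g x)\<^sup>2)"
    using i by auto
  have bnd:  "norm ((a * f x + b * g x)\<^sup>2) \<le> norm (2 * a\<^sup>2 * (f x)\<^sup>2 + 2 * b\<^sup>2 * (g x)\<^sup>2)" for x
  proof -
    have e: "(a * f x + b * g x)\<^sup>2 + (a * f x - b * g x)\<^sup>2 = 2 * (a * f x)\<^sup>2 + 2 * (b * g x)\<^sup>2"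
      by (simp add: power2_eq_square algebra_simps)
    have "(a * f x + b * g x)\<^sup>2 \<le> 2 * (a * f x)\<^sup>2 + 2 * (b * g x)\<^sup>2"
      using e zero_le_power2[of "a * f x - b * g x"] by linarith
    then show ?thesis by (simp add: power_mult_distrib)
  qed
  have "integrable M (\<lambda>x. (a * f x + b * g x)\<^sup>2)"
    by (rule Bochner_Integration.integrable_bound[OF int]) (measurable, rule AE_I2, rule bnd)
  then show ?thesis unfolding L2_def by simp
qed


lemma L2_sum:
  fixes n :: nat
  assumes "\<And>i. L2 M (fs i)"
  shows "L2 M (\<lambda>x. \<Sum>i<n. c i * fs i x)"
proof (induction n)
  case 0 then show ?case by (simp add: L2_zero)
next
  case (Suc n)
  have "L2 M (\<lambda>x. 1 * (\<Sum>i<n. c i * fs i x) + c n * fs n x)"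
    by (rule L2_lin[OF Suc assms])
  then show ?case by simp
qed

lemma L2_diff_sum:
  fixes n :: nat
  assumes "\<And>i. L2 M (fs i)" "L2 M g"
  shows "L2 M (\<lambda>x. g x - (\<Sum>i<n. c i * fs i x))"
proof -
  have "L2 M (\<lambda>x. 1 * g x + (-1) * (\<Sum>i<n. c i * fs i x))"
    by (rule L2_lin[OF assms(2) L2_sum[OF assms(1)]])
  then show ?thesis by simp
qed

lemma bl_lin: "bounded_linear_L2 M N A \<Longrightarrow> L2 M f \<Longrightarrow> L2 M g \<Longrightarrow>
   AE y in N. A (\<lambda>x. a * f x + b * g x) y = a * A f y + b * A g y"
  unfolding bounded_linear_L2_def by blast

lemma bl_L2: "bounded_linear_L2 M N A \<Longrightarrow> L2 M f \<Longrightarrow> L2 N (A f)"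
  unfolding bounded_linear_L2_def by blast

lemma bl_bound: "bounded_linear_L2 M N A \<Longrightarrow> \<exists>C. \<forall>f. L2 M f \<longrightarrow> L2norm N (A f) \<le> C * L2norm M f"
  unfolding bounded_linear_L2_def by blast

lemma A_sum:
  fixes n :: nat
  assumes A: "bounded_linear_L2 M N A" and fs: "\<And>i. L2 M (fs i)"
  shows "AE y in N. A (\<lambda>x. \<Sum>i<n. c i * fs i x) y = (\<Sum>i<n. c i * A (fs i) y)"
proof (induction n)
  case 0
  have "AE y in N. A (\<lambda>x. 0 * 0 + 0 * 0) y = 0 * A (\<lambda>x. 0) y + 0 * A (\<lambda>x. 0) y"
    by (rule bl_lin[OF A L2_zero L2_zero])
  then show ?case by simp
next
  case (Suc n)
  have "AE y in N. A (\<lambda>x. 1 * (\<Sum>i<n. c i * fs i x) + c n * fs n x) y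
     = 1 * A (\<lambda>x. \<Sum>i<n. c i * fs i x) y + c n * A (fs n) y"
    by (rule bl_lin[OF A L2_sum[OF fs] fs])
  with Suc show ?case by (auto elim!: AE_mp)
qed

lemma A_diff_sum:
  fixes n :: nat
  assumes A: "bounded_linear_L2 M N A" and fs: "\<And>i. L2 M (fs i)" and g: "L2 M g"
  shows "AE y in N. A (\<lambda>x. g x - (\<Sum>i<n. c i * fs i x)) y = A g y - (\<Sum>i<n. c i * A (fs i) y)"
proof -
  have "AE y in N. A (\<lambda>x. 1 * g x + (-1) * (\<Sum>i<n. c i * fs i x)) y
     = 1 * A g y + (-1) * A (\<lambda>x. \<Sum>i<n. c i * fs i x) y"
    by (rule bl_lin[OF A g L2_sum[OF fs]])
  with A_sum[where fs=fs and c=c and n=n, OF A fs] show ?thesis by (auto elim!: AE_mp)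
qed

lemma kernel_restrict_meas:
  fixes \<mu> :: "'w \<Rightarrow> 'x measure" and \<phi> :: "'x \<Rightarrow> 'w \<Rightarrow> ennreal"
  assumes sets_mu: "\<And>\<omega>. \<omega> \<in> space \<Omega> \<Longrightarrow> sets (\<mu> \<omega>) = sets X"
    and meas_mu: "\<And>B. B \<in> sets X \<Longrightarrow> (\<lambda>\<omega>. emeasure (\<mu> \<omega>) B) \<in> borel_measurable \<Omega>"
    and T[measurable]: "T \<in> sets X" and fin: "\<And>\<omega>. \<omega> \<in> space \<Omega> \<Longrightarrow> emeasure (\<mu> \<omega>) T < \<infinity>"
    and phi[measurable]: "(\<lambda>(x,\<omega>). \<phi> x \<omega>) \<in> borel_measurable (X \<Otimes>\<^sub>M \<Omega>)"
  shows "(\<lambda>\<omega>. \<integral>\<^sup>+x. \<phi> x \<omega> * indicator T x \<partial>\<mu> \<omega>) \<in> borel_measurable \<Omega>"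
proof (cases "space X = {}")
  case True
  have "\<integral>\<^sup>+x. \<phi> x \<omega> * indicator T x \<partial>\<mu> \<omega> = 0" if "\<omega> \<in> space \<Omega>" for \<omega>
  proof -
    have "space (\<mu> \<omega>) = {}" using sets_eq_imp_space_eq[OF sets_mu[OF that]] True by simp
    then show ?thesis by (simp add: nn_integral_empty)
  qed
  then show ?thesis by (simp cong: measurable_cong)
next
  case False
  define c where "c \<omega> = 1 + emeasure (\<mu> \<omega>) T" for \<omega>
  define L where "L \<omega> = density (\<mu> \<omega>) (\<lambda>x. indicator T x / c \<omega>)" for \<omega>
  have c_meas[measurable]: "c \<in> borel_measurable \<Omega>"
    unfolding c_def using meas_mu[OF T] by measurable
  have c_ne: "c \<omega> \<noteq> 0" "c \<omega> \<noteq> \<infinity>" if "\<omega> \<in> space \<Omega>" for \<omega>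
    using fin[OF that] by (auto simp: c_def)
  have wm: "(\<lambda>x. indicator T x / c \<omega>) \<in> borel_measurable (\<mu> \<omega>)" if "\<omega> \<in> space \<Omega>" for \<omega>
    using sets_mu[OF that] by (simp add: measurable_cong_sets[OF sets_mu[OF that] refl])
  have Tm: "T \<in> sets (\<mu> \<omega>)" if "\<omega> \<in> space \<Omega>" for \<omega>
    using sets_mu[OF that] by simp
  have emL: "emeasure (L \<omega>) B = emeasure (\<mu> \<omega>) (B \<inter> T) / c \<omega>"
    if "\<omega> \<in> space \<Omega>" "B \<in> sets X" for \<omega> B
  proof -
    have Bm: "B \<in> sets (\<mu> \<omega>)" using sets_mu[OF that(1)] that(2) by simp
    have "emeasure (L \<omega>) B = \<integral>\<^sup>+x. indicator T x / c \<omega> * indicator B x \<partial>\<mu> \<omega>"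
      unfolding L_def by (rule emeasure_density[OF wm[OF that(1)] Bm])
    also have "\<dots> = \<integral>\<^sup>+x. indicator (B \<inter> T) x * (1 / c \<omega>) \<partial>\<mu> \<omega>"
      by (intro nn_integral_cong) (auto simp: indicator_def ennreal_divide_times)
    also have "\<dots> = emeasure (\<mu> \<omega>) (B \<inter> T) * (1 / c \<omega>)"
      using Bm Tm[OF that(1)] by (simp add: nn_integral_multc)
    finally show ?thesis by (simp add: ennreal_times_divide)
  qed
  have sp: "subprob_space (L \<omega>)" if "\<omega> \<in> space \<Omega>" for \<omega>
  proof
    have "space (L \<omega>) = space X" unfolding L_def using sets_eq_imp_space_eq[OF sets_mu[OF that]] by simp
    then have "emeasure (L \<omega>) (space (L \<omega>)) = emeasure (\<mu> \<omega>) T / c \<omega>"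
      using emL[OF that, of "space X"] sets.sets_into_space[OF T] by (simp add: Int_absorb1)
    also have "\<dots> \<le> 1"
      by (rule divide_le_posI_ennreal) (auto simp: c_def intro: add_pos_nonneg)
    finally show "emeasure (L \<omega>) (space (L \<omega>)) \<le> 1" .
    show "space (L \<omega>) \<noteq> {}" using \<open>space (L \<omega>) = space X\<close> False by simp
  qed
  have Lm[measurable]: "L \<in> measurable \<Omega> (subprob_algebra X)"
  proof (rule measurable_subprob_algebra)
    show "subprob_space (L a)" if "a \<in> space \<Omega>" for a using sp[OF that] .
    show "sets (L a) = sets X" if "a \<in> space \<Omega>" for a unfolding L_def using sets_mu[OF that] by simp
    show "(\<lambda>a. emeasure (L a) B) \<in> borel_measurable \<Omega>" if B: "B \<in> sets X" for B
    proof -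
      have [measurable]: "(\<lambda>\<omega>. emeasure (\<mu> \<omega>) (B \<inter> T)) \<in> borel_measurable \<Omega>"
        using meas_mu B T by blast
      have "(\<lambda>\<omega>. emeasure (\<mu> \<omega>) (B \<inter> T) / c \<omega>) \<in> borel_measurable \<Omega>" by measurable
      then show ?thesis by (rule measurable_cong[THEN iffD1, rotated]) (simp add: emL B)
    qed
  qed
  have phi2[measurable]: "(\<lambda>(\<omega>, x). \<phi> x \<omega>) \<in> borel_measurable (\<Omega> \<Otimes>\<^sub>M X)"
    by measurable
  have I: "(\<lambda>\<omega>. integral\<^sup>N (L \<omega>) (\<lambda>x. \<phi> x \<omega>)) \<in> borel_measurable \<Omega>"
    by (rule nn_integral_measurable_subprob_algebra2[OF phi2 Lm])
  have eq: "\<integral>\<^sup>+x. \<phi> x \<omega> * indicator T x \<partial>\<mu> \<omega> = c \<omega> * integral\<^sup>N (L \<omega>) (\<lambda>x. \<phi> x \<omega>)"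
    if "\<omega> \<in> space \<Omega>" for \<omega>
  proof -
    have "(\<lambda>x. \<phi> x \<omega>) \<in> borel_measurable X"
      using that by measurable
    then have pm: "(\<lambda>x. \<phi> x \<omega>) \<in> borel_measurable (\<mu> \<omega>)"
      by (simp add: measurable_cong_sets[OF sets_mu[OF that] refl])
    have "integral\<^sup>N (L \<omega>) (\<lambda>x. \<phi> x \<omega>) = \<integral>\<^sup>+x. indicator T x / c \<omega> * \<phi> x \<omega> \<partial>\<mu> \<omega>"
      unfolding L_def by (rule nn_integral_density[OF wm[OF that] pm])
    then have "c \<omega> * integral\<^sup>N (L \<omega>) (\<lambda>x. \<phi> x \<omega>) = \<integral>\<^sup>+x. c \<omega> * (indicator T x / c \<omega> * \<phi> x \<omega>) \<partial>\<mu> \<omega>"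
      using wm[OF that] pm by (simp add: nn_integral_cmult)
    also have "\<dots> = \<integral>\<^sup>+x. \<phi> x \<omega> * indicator T x \<partial>\<mu> \<omega>"
      using c_ne[OF that] by (intro nn_integral_cong) (auto simp: indicator_def ennreal_divide_self ennreal_times_divide mult.assoc[symmetric] top.not_eq_extremum)
    finally show ?thesis by simp
  qed
  have "(\<lambda>\<omega>. c \<omega> * integral\<^sup>N (L \<omega>) (\<lambda>x. \<phi> x \<omega>)) \<in> borel_measurable \<Omega>"
    using I by measurable
  then show ?thesis by (rule measurable_cong[THEN iffD1, rotated]) (simp add: eq)
qed

lemma nn_integral_SUP_restrict:
  fixes T :: "nat \<Rightarrow> 'a set"
  assumes inc: "incseq T" and Tm: "\<And>N. T N \<in> sets M" and f[measurable]: "f \<in> borel_measurable M"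
    and ae: "AE x in M. x \<notin> (\<Union>N. T N) \<longrightarrow> f x = 0"
  shows "(\<integral>\<^sup>+x. f x \<partial>M) = (SUP N. \<integral>\<^sup>+x. f x * indicator (T N) x \<partial>M)"
proof -
  have "(\<integral>\<^sup>+x. f x \<partial>M) = \<integral>\<^sup>+x. (SUP N. f x * indicator (T N) x) \<partial>M"
  proof (rule nn_integral_cong_AE)
    show "AE x in M. f x = (SUP N. f x * indicator (T N) x)"
      using ae
    proof eventually_elim
      case (elim x)
      show ?case
      proof (cases "x \<in> (\<Union>N. T N)")
        case True
        then obtain N0 where "x \<in> T N0" by auto
        then have "f x \<le> (SUP N. f x * indicator (T N) x)"
          by (intro SUP_upper2[of N0]) auto
        moreover have "(SUP N. f x * indicator (T N) x) \<le> f x"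
          by (intro SUP_least) (auto simp: indicator_def)
        ultimately show ?thesis by (rule antisym)
      next
        case False
        then show ?thesis using elim by simp
      qed
    qed
  qed
  also have "\<dots> = (SUP N. \<integral>\<^sup>+x. f x * indicator (T N) x \<partial>M)"
  proof (rule nn_integral_monotone_convergence_SUP)
    show "incseq (\<lambda>N x. f x * indicator (T N) x)"
      using inc by (auto simp: incseq_def le_fun_def indicator_def intro!: mult_left_mono)
    show "(\<lambda>x. f x * indicator (T N) x) \<in> borel_measurable M" for N
      using Tm[of N] by measurable
  qed
  finally show ?thesis .
qed

lemma nn_L2: "L2 M h \<Longrightarrow> (\<integral>\<^sup>+x. ennreal ((h x)\<^sup>2) \<partial>M) = ennreal (\<integral>x. (h x)\<^sup>2 \<partial>M)"
  unfolding L2_def by (intro nn_integral_eq_integral) auto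

lemma L2norm_sq_lt: "L2norm M h < e \<Longrightarrow> (\<integral>x. (h x)\<^sup>2 \<partial>M) < e\<^sup>2"
proof -
  assume a: "L2norm M h < e"
  have J: "0 \<le> (\<integral>x. (h x)\<^sup>2 \<partial>M)" by simp
  have "sqrt (\<integral>x. (h x)\<^sup>2 \<partial>M) < e" using a by (simp add: L2norm_def)
  then have "(sqrt (\<integral>x. (h x)\<^sup>2 \<partial>M))\<^sup>2 < e\<^sup>2"
    by (intro power_strict_mono) auto
  then show ?thesis using J by simp
qed

lemma zero_off:
  assumes tot: "total_L2 M fs" and g: "L2 M g"
  shows "AE x in M. (\<forall>n. fs n x = 0) \<longrightarrow> g x = 0"
proof -
  define Z where "Z = {x\<in>space M. \<forall>n. fs n x = 0}"
  have fsL2: "\<And>i. L2 M (fs i)" using tot by (simp add: total_L2_def)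
  have fsm[measurable]: "\<And>i. fs i \<in> borel_measurable M" using fsL2 by (simp add: L2_def)
  have gm[measurable]: "g \<in> borel_measurable M" using g by (simp add: L2_def)
  have Zm[measurable]: "Z \<in> sets M" unfolding Z_def by measurable
  have "(\<integral>\<^sup>+x. ennreal ((g x)\<^sup>2) * indicator Z x \<partial>M) \<le> 0"
  proof (rule ennreal_le_epsilon)
    fix e :: real assume e: "0 < e"
    have tt: "\<forall>\<epsilon>>0. \<exists>m c. L2norm M (\<lambda>x. g x - (\<Sum>i<m. c i * fs i x)) < \<epsilon>"
      using tot g unfolding total_L2_def by blast
    have "0 < sqrt e" using e by simp
    then obtain m c where mc: "L2norm M (\<lambda>x. g x - (\<Sum>i<m. c i * fs i x)) < sqrt e"
      using tt by blast
    have D: "L2 M (\<lambda>x. g x - (\<Sum>i<m. c i * fs i x))" by (rule L2_diff_sum[OF fsL2 g])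
    have "(\<integral>\<^sup>+x. ennreal ((g x)\<^sup>2) * indicator Z x \<partial>M)
        \<le> (\<integral>\<^sup>+x. ennreal ((g x - (\<Sum>i<m. c i * fs i x))\<^sup>2) \<partial>M)"
      by (intro nn_integral_mono) (auto simp: indicator_def Z_def)
    also have "\<dots> = ennreal (\<integral>x. (g x - (\<Sum>i<m. c i * fs i x))\<^sup>2 \<partial>M)"
      by (rule nn_L2[OF D])
    also have "\<dots> \<le> ennreal e"
      using L2norm_sq_lt[OF mc] e by (intro ennreal_leI) simp
    finally show "(\<integral>\<^sup>+x. ennreal ((g x)\<^sup>2) * indicator Z x \<partial>M) \<le> 0 + ennreal e" by simp
  qed
  then have "(\<integral>\<^sup>+x. ennreal ((g x)\<^sup>2) * indicator Z x \<partial>M) = 0" by simp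
  then have "AE x in M. ennreal ((g x)\<^sup>2) * indicator Z x = 0"
    by (subst (asm) nn_integral_0_iff_AE) auto
  then show ?thesis using AE_space
  proof eventually_elim
    case (elim x)
    show ?case
    proof
      assume "\<forall>n. fs n x = 0"
      then have "x \<in> Z" using elim by (simp add: Z_def)
      then show "g x = 0" using elim by simp
    qed
  qed
qed

lemma op_bound:
  fixes n :: nat
  assumes bl: "bounded_linear_L2 M N A" and fs: "\<And>i. L2 M (fs i)" and g: "L2 M g"
    and C: "\<forall>f. L2 M f \<longrightarrow> L2norm N (A f) \<le> C * L2norm M f"
    and hH: "AE y in N. Hy y = (\<Sum>i<n. c i * A (fs i) y)"
    and I: "(\<integral>\<^sup>+x. ennreal ((g x - (\<Sum>i<n. c i * fs i x))\<^sup>2) \<partial>M) < ennreal e"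
  shows "(\<integral>\<^sup>+y. ennreal ((Hy y - A g y)\<^sup>2) \<partial>N) \<le> ennreal (C\<^sup>2 * e)"
proof -
  define \<phi> where "\<phi> = (\<lambda>x. g x - (\<Sum>i<n. c i * fs i x))"
  have phiL2: "L2 M \<phi>" unfolding \<phi>_def by (rule L2_diff_sum[OF fs g])
  have AphiL2: "L2 N (A \<phi>)" by (rule bl_L2[OF bl phiL2])
  define a where "a = (\<integral>y. (A \<phi> y)\<^sup>2 \<partial>N)"
  define b where "b = (\<integral>x. (\<phi> x)\<^sup>2 \<partial>M)"
  have a0: "0 \<le> a" and b0: "0 \<le> b" unfolding a_def b_def by simp_all
  have "ennreal b < ennreal e" using I nn_L2[OF phiL2] unfolding \<phi>_def b_def by simp
  then have be: "b < e" using b0 by (simp add: ennreal_less_iff)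
  have "sqrt a \<le> C * sqrt b" using C phiL2 unfolding L2norm_def a_def b_def by blast
  then have "(sqrt a)\<^sup>2 \<le> (C * sqrt b)\<^sup>2"
    using a0 by (intro power_mono) auto
  then have ab: "a \<le> C\<^sup>2 * b" using a0 b0 by (simp add: power_mult_distrib)
  have "C\<^sup>2 * b \<le> C\<^sup>2 * e" using be by (intro mult_left_mono) auto
  with ab have ae: "a \<le> C\<^sup>2 * e" by linarith
  have "AE y in N. A \<phi> y = A g y - (\<Sum>i<n. c i * A (fs i) y)"
    unfolding \<phi>_def by (rule A_diff_sum[OF bl fs g])
  with hH have "AE y in N. ennreal ((Hy y - A g y)\<^sup>2) = ennreal ((A \<phi> y)\<^sup>2)"
    by eventually_elim (simp add: power2_commute)
  then have "(\<integral>\<^sup>+y. ennreal ((Hy y - A g y)\<^sup>2) \<partial>N) = (\<integral>\<^sup>+y. ennreal ((A \<phi> y)\<^sup>2) \<partial>N)"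
    by (rule nn_integral_cong_AE)
  also have "\<dots> = ennreal a" unfolding a_def by (rule nn_L2[OF AphiL2])
  also have "\<dots> \<le> ennreal (C\<^sup>2 * e)" using ae by (rule ennreal_leI)
  finally show ?thesis .
qed

lemma conv_ae:
  fixes H :: "nat \<Rightarrow> 'b \<Rightarrow> real"
  assumes Hm[measurable]: "\<And>m. H m \<in> borel_measurable N" and Fm[measurable]: "F \<in> borel_measurable N"
    and K: "0 \<le> K"
    and bnd: "\<And>m. (\<integral>\<^sup>+y. ennreal ((H m y - F y)\<^sup>2) \<partial>N) \<le> ennreal (K * (1/2)^m)"
  shows "AE y in N. (\<lambda>m. H m y) \<longlonglongrightarrow> F y"
proof -
  have sK: "summable (\<lambda>m. K * (1/2::real)^m)" by (intro summable_mult summable_geometric) simp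
  have "(\<integral>\<^sup>+y. (\<Sum>m. ennreal ((H m y - F y)\<^sup>2)) \<partial>N) = (\<Sum>m. \<integral>\<^sup>+y. ennreal ((H m y - F y)\<^sup>2) \<partial>N)"
    by (rule nn_integral_suminf) measurable
  also have "\<dots> \<le> (\<Sum>m. ennreal (K * (1/2)^m))"
    by (intro suminf_le bnd) auto
  also have "\<dots> = ennreal (\<Sum>m. K * (1/2)^m)"
    using K sK by (intro suminf_ennreal2) auto
  also have "\<dots> < \<infinity>" by simp
  finally have "(\<integral>\<^sup>+y. (\<Sum>m. ennreal ((H m y - F y)\<^sup>2)) \<partial>N) \<noteq> \<infinity>" by simp
  then have "AE y in N. (\<Sum>m. ennreal ((H m y - F y)\<^sup>2)) \<noteq> \<infinity>"
    by (intro nn_integral_PInf_AE) measurable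
  then show ?thesis
  proof eventually_elim
    case (elim y)
    then have "summable (\<lambda>m. (H m y - F y)\<^sup>2)"
      by (intro summable_suminf_not_top) auto
    then have "(\<lambda>m. (H m y - F y)\<^sup>2) \<longlonglongrightarrow> 0" by (rule summable_LIMSEQ_zero)
    then have "(\<lambda>m. sqrt ((H m y - F y)\<^sup>2)) \<longlonglongrightarrow> sqrt 0" by (rule tendsto_real_sqrt)
    then have "(\<lambda>m. \<bar>H m y - F y\<bar>) \<longlonglongrightarrow> 0" by simp
    then have "(\<lambda>m. H m y - F y) \<longlonglongrightarrow> 0" by (simp add: tendsto_rabs_zero_iff)
    then show ?case by (rule LIM_zero_cancel)
  qed
qed

lemma rat_approx:
  assumes tot: "total_L2 M fs" and g: "L2 M g" and d: "0 < \<delta>"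
  shows "\<exists>qs::rat list. (\<integral>\<^sup>+x. ennreal ((g x - (\<Sum>i<length qs. real_of_rat (qs!i) * fs i x))\<^sup>2) \<partial>M) < ennreal \<delta>"
proof -
  have fsL2: "\<And>i. L2 M (fs i)" using tot by (simp add: total_L2_def)
  have fsm[measurable]: "\<And>i. fs i \<in> borel_measurable M" using fsL2 by (simp add: L2_def)
  have fsi: "\<And>i. integrable M (\<lambda>x. (fs i x)\<^sup>2)" using fsL2 by (simp add: L2_def)
  have gm[measurable]: "g \<in> borel_measurable M" using g by (simp add: L2_def)
  have tt: "\<forall>\<epsilon>>0. \<exists>m c. L2norm M (\<lambda>x. g x - (\<Sum>i<m. c i * fs i x)) < \<epsilon>"
    using tot g unfolding total_L2_def by blast
  have "0 < sqrt (\<delta>/4)" using d by simp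
  then obtain m c where mc: "L2norm M (\<lambda>x. g x - (\<Sum>i<m. c i * fs i x)) < sqrt (\<delta>/4)"
    using tt by blast
  define D where "D = (\<lambda>x. g x - (\<Sum>i<m. c i * fs i x))"
  have DL2: "L2 M D" unfolding D_def by (rule L2_diff_sum[OF fsL2 g])
  have Dm[measurable]: "D \<in> borel_measurable M" and Di: "integrable M (\<lambda>x. (D x)\<^sup>2)"
    using DL2 by (auto simp: L2_def)
  have JD: "(\<integral>x. (D x)\<^sup>2 \<partial>M) < \<delta>/4"
    using L2norm_sq_lt[OF mc] d unfolding D_def by simp
  define K where "K i = (\<integral>x. (fs i x)\<^sup>2 \<partial>M)" for i
  have K0: "0 \<le> K i" for i unfolding K_def by simp
  define t where "t i = sqrt (\<delta> / (8 * (real m + 1)\<^sup>2 * (K i + 1)))" for i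
  have t0: "0 < t i" for i unfolding t_def using d K0[of i] by (simp add: add_nonneg_pos)
  have "\<forall>i. \<exists>q. \<bar>c i - real_of_rat q\<bar> < t i"
  proof
    fix i
    obtain r where "r \<in> \<rat>" "c i - t i < r" "r < c i + t i"
      using Rats_dense_in_real[of "c i - t i" "c i + t i"] t0[of i] by auto
    moreover from \<open>r \<in> \<rat>\<close> obtain qq where "r = real_of_rat qq" by (rule Rats_cases)
    ultimately have "\<bar>c i - real_of_rat qq\<bar> < t i" by (simp add: abs_diff_less_iff)
    then show "\<exists>q. \<bar>c i - real_of_rat q\<bar> < t i" ..
  qed
  then have "\<exists>q. \<forall>i. \<bar>c i - real_of_rat (q i)\<bar> < t i" by (rule choice)
  then obtain q where q: "\<And>i. \<bar>c i - real_of_rat (q i)\<bar> < t i" by blast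
  define qs where "qs = map q [0..<m]"
  define dd where "dd i = c i - real_of_rat (q i)" for i
  have sq: "(\<Sum>i<length qs. real_of_rat (qs!i) * fs i x) = (\<Sum>i<m. real_of_rat (q i) * fs i x)" for x
    unfolding qs_def by (intro sum.cong) auto
  have pw: "g x - (\<Sum>i<m. real_of_rat (q i) * fs i x) = D x + (\<Sum>i<m. dd i * fs i x)" for x
    unfolding D_def dd_def by (simp add: left_diff_distrib sum_subtractf)
  define R where "R x = 2 * (D x)\<^sup>2 + 2 * real m * (\<Sum>i<m. (dd i)\<^sup>2 * (fs i x)\<^sup>2)" for x
  have Ri: "integrable M R" unfolding R_def using Di fsi by auto
  have bnd: "(g x - (\<Sum>i<m. real_of_rat (q i) * fs i x))\<^sup>2 \<le> R x" for x
  proof -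
    define E where "E = (\<Sum>i<m. dd i * fs i x)"
    have e: "(D x + E)\<^sup>2 + (D x - E)\<^sup>2 = 2 * (D x)\<^sup>2 + 2 * E\<^sup>2"
      by (simp add: power2_eq_square algebra_simps)
    have 1: "(D x + E)\<^sup>2 \<le> 2 * (D x)\<^sup>2 + 2 * E\<^sup>2"
      using e zero_le_power2[of "D x - E"] by linarith
    have "E\<^sup>2 \<le> (\<Sum>i<m. (dd i * fs i x)\<^sup>2) * real (card {..<m})"
      unfolding E_def by (rule sum_squared_le_sum_of_squares)
    then have 2: "E\<^sup>2 \<le> real m * (\<Sum>i<m. (dd i)\<^sup>2 * (fs i x)\<^sup>2)"
      by (simp add: power_mult_distrib mult.commute)
    have 3: "2 * E\<^sup>2 \<le> 2 * real m * (\<Sum>i<m. (dd i)\<^sup>2 * (fs i x)\<^sup>2)" using 2 by simp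
    show ?thesis unfolding pw R_def E_def[symmetric] using 1 3 by linarith
  qed
  have int_le: "(\<integral>x. (g x - (\<Sum>i<m. real_of_rat (q i) * fs i x))\<^sup>2 \<partial>M) \<le> (\<integral>x. R x \<partial>M)"
  proof (rule integral_mono)
    show "integrable M (\<lambda>x. (g x - (\<Sum>i<m. real_of_rat (q i) * fs i x))\<^sup>2)"
      using L2_diff_sum[where n=m and c="\<lambda>i. real_of_rat (q i)", OF fsL2 g] by (simp add: L2_def)
  qed (use Ri bnd in auto)
  have intR: "(\<integral>x. R x \<partial>M) = 2 * (\<integral>x. (D x)\<^sup>2 \<partial>M) + 2 * real m * (\<Sum>i<m. (dd i)\<^sup>2 * K i)"
    unfolding R_def K_def using Di fsi by (simp add: integral_sum)
  have ddK: "(dd i)\<^sup>2 * K i \<le> \<delta> / (8 * (real m + 1)\<^sup>2)" for i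
  proof -
    have "\<bar>dd i\<bar>\<^sup>2 \<le> (t i)\<^sup>2"
      using q[of i] unfolding dd_def by (intro power_mono) auto
    then have "(dd i)\<^sup>2 \<le> (t i)\<^sup>2" by simp
    also have "\<dots> = \<delta> / (8 * (real m + 1)\<^sup>2 * (K i + 1))"
      unfolding t_def using d K0[of i] by (simp add: add_nonneg_pos)
    finally have "(dd i)\<^sup>2 * K i \<le> \<delta> / (8 * (real m + 1)\<^sup>2 * (K i + 1)) * K i"
      using K0[of i] by (rule mult_right_mono)
    also have "\<dots> = \<delta> / (8 * (real m + 1)\<^sup>2) * (K i / (K i + 1))"
      by (simp add: field_simps)
    also have "\<dots> \<le> \<delta> / (8 * (real m + 1)\<^sup>2) * 1"
      using K0[of i] d by (intro mult_left_mono) auto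
    finally show ?thesis by simp
  qed
  have "(\<Sum>i<m. (dd i)\<^sup>2 * K i) \<le> real m * (\<delta> / (8 * (real m + 1)\<^sup>2))"
    using sum_mono[of "{..<m}" "\<lambda>i. (dd i)\<^sup>2 * K i" "\<lambda>i. \<delta> / (8 * (real m + 1)\<^sup>2)", OF ddK] by simp
  then have "2 * real m * (\<Sum>i<m. (dd i)\<^sup>2 * K i) \<le> 2 * real m * (real m * (\<delta> / (8 * (real m + 1)\<^sup>2)))"
    by (intro mult_left_mono) auto
  also have "\<dots> \<le> \<delta> / 4"
  proof -
    define P where "P = (real m + 1)\<^sup>2"
    have P0: "0 < P" unfolding P_def by (simp add: add_nonneg_pos)
    have mP: "real m * real m \<le> P" unfolding P_def by (simp add: power2_eq_square algebra_simps)
    have "2 * real m * (real m * (\<delta> / (8 * P))) = \<delta> / 4 * (real m * real m / P)"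
      using P0 by (simp add: field_simps)
    also have "\<dots> \<le> \<delta> / 4 * 1"
      using d P0 mP by (intro mult_left_mono) (auto simp: divide_le_eq_1)
    finally show ?thesis unfolding P_def by simp
  qed
  finally have T2: "2 * real m * (\<Sum>i<m. (dd i)\<^sup>2 * K i) \<le> \<delta> / 4" by simp
  have realint: "(\<integral>x. (g x - (\<Sum>i<m. real_of_rat (q i) * fs i x))\<^sup>2 \<partial>M) < \<delta>"
    using int_le intR T2 JD d by linarith
  have L2q: "L2 M (\<lambda>x. g x - (\<Sum>i<m. real_of_rat (q i) * fs i x))"
    by (rule L2_diff_sum[OF fsL2 g])
  have "(\<integral>\<^sup>+x. ennreal ((g x - (\<Sum>i<length qs. real_of_rat (qs!i) * fs i x))\<^sup>2) \<partial>M)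
      = ennreal (\<integral>x. (g x - (\<Sum>i<m. real_of_rat (q i) * fs i x))\<^sup>2 \<partial>M)"
    unfolding sq by (rule nn_L2[OF L2q])
  also have "\<dots> < ennreal \<delta>" using realint d by (simp add: ennreal_lessI)
  finally show ?thesis by blast
qed

theorem lemma9:
  fixes X :: "'x measure" and Y :: "'y measure" and \<Omega> :: "'w measure"
    and \<mu> :: "'w \<Rightarrow> 'x measure" and \<nu> :: "'w \<Rightarrow> 'y measure"
    and A :: "'w \<Rightarrow> ('x \<Rightarrow> real) \<Rightarrow> ('y \<Rightarrow> real)"
    and f :: "nat \<Rightarrow> 'x \<Rightarrow> real" and k :: "nat \<Rightarrow> 'y \<Rightarrow> real"
  assumes "regular_family \<Omega> X \<mu>" and "regular_family \<Omega> Y \<nu>"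
    and "\<forall>\<omega>\<in>space \<Omega>. bounded_linear_L2 (\<mu> \<omega>) (\<nu> \<omega>) (A \<omega>)"
    and "\<forall>n. f n \<in> borel_measurable X" and "\<forall>n. k n \<in> borel_measurable Y"
    and "\<forall>\<omega>\<in>space \<Omega>. total_L2 (\<mu> \<omega>) f \<and> total_L2 (\<nu> \<omega>) k"
    and "\<forall>n. realizable \<Omega> Y \<nu> (\<lambda>\<omega>. A \<omega> (f n))"
  shows "\<forall>g \<in> borel_measurable (X \<Otimes>\<^sub>M \<Omega>).
           (\<forall>\<omega>\<in>space \<Omega>. L2 (\<mu> \<omega>) (\<lambda>x. g (x, \<omega>))) \<longrightarrow>
           realizable \<Omega> Y \<nu> (\<lambda>\<omega>. A \<omega> (\<lambda>x. g (x, \<omega>)))"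
proof (intro ballI impI)
  fix g :: "'x \<times> 'w \<Rightarrow> real"
  assume gm[measurable]: "g \<in> borel_measurable (X \<Otimes>\<^sub>M \<Omega>)"
     and gL2': "\<forall>\<omega>\<in>space \<Omega>. L2 (\<mu> \<omega>) (\<lambda>x. g (x, \<omega>))"
  have gL2: "\<And>\<omega>. \<omega> \<in> space \<Omega> \<Longrightarrow> L2 (\<mu> \<omega>) (\<lambda>x. g (x, \<omega>))" using gL2' by blast
  have sets_mu: "\<And>\<omega>. \<omega> \<in> space \<Omega> \<Longrightarrow> sets (\<mu> \<omega>) = sets X"
    and meas_mu: "\<And>B. B \<in> sets X \<Longrightarrow> (\<lambda>\<omega>. emeasure (\<mu> \<omega>) B) \<in> borel_measurable \<Omega>"
    using assms(1) unfolding regular_family_def by auto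
  have sets_nu: "\<And>\<omega>. \<omega> \<in> space \<Omega> \<Longrightarrow> sets (\<nu> \<omega>) = sets Y"
    using assms(2) unfolding regular_family_def by auto
  have bl: "\<And>\<omega>. \<omega> \<in> space \<Omega> \<Longrightarrow> bounded_linear_L2 (\<mu> \<omega>) (\<nu> \<omega>) (A \<omega>)" using assms(3) by auto
  have fm[measurable]: "\<And>n. f n \<in> borel_measurable X" using assms(4) by auto
  have totmu: "\<And>\<omega>. \<omega> \<in> space \<Omega> \<Longrightarrow> total_L2 (\<mu> \<omega>) f" using assms(6) by auto
  have fL2: "\<And>\<omega> n. \<omega> \<in> space \<Omega> \<Longrightarrow> L2 (\<mu> \<omega>) (f n)" using totmu unfolding total_L2_def by blast
  have "\<forall>n. \<exists>h. h \<in> borel_measurable (Y \<Otimes>\<^sub>M \<Omega>) \<and> (\<forall>\<omega>\<in>space \<Omega>. AE y in \<nu> \<omega>. h (y, \<omega>) = A \<omega> (f n) y)"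
    using assms(7) unfolding realizable_def by blast
  then have "\<exists>hh. \<forall>n. hh n \<in> borel_measurable (Y \<Otimes>\<^sub>M \<Omega>) \<and> (\<forall>\<omega>\<in>space \<Omega>. AE y in \<nu> \<omega>. hh n (y, \<omega>) = A \<omega> (f n) y)"
    by (rule choice)
  then obtain hh where hhm[measurable]: "\<And>n. hh n \<in> borel_measurable (Y \<Otimes>\<^sub>M \<Omega>)"
    and hhae: "\<And>n \<omega>. \<omega> \<in> space \<Omega> \<Longrightarrow> AE y in \<nu> \<omega>. hh n (y, \<omega>) = A \<omega> (f n) y"
    by blast

  define sumf where "sumf qs x = (\<Sum>i<length qs. real_of_rat (qs!i) * f i x)" for qs :: "rat list" and x
  define I where "I \<omega> qs = (\<integral>\<^sup>+x. ennreal ((g (x, \<omega>) - sumf qs x)\<^sup>2) \<partial>\<mu> \<omega>)" for \<omega> qs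
  define T where "T N = {x\<in>space X. \<exists>n<N. 1 \<le> real (Suc N) * (f n x)\<^sup>2}" for N
  have Tm[measurable]: "T N \<in> sets X" for N unfolding T_def by measurable
  have Tinc: "incseq T"
  proof (rule incseq_SucI)
    fix N show "T N \<subseteq> T (Suc N)"
    proof
      fix x assume "x \<in> T N"
      then obtain n where x: "x \<in> space X" "n < N" "1 \<le> real (Suc N) * (f n x)\<^sup>2" by (auto simp: T_def)
      have "real (Suc N) * (f n x)\<^sup>2 \<le> real (Suc (Suc N)) * (f n x)\<^sup>2"
        by (intro mult_right_mono) auto
      with x show "x \<in> T (Suc N)" unfolding T_def by (auto intro!: exI[of _ n])
    qed
  qed
  have Tfin: "emeasure (\<mu> \<omega>) (T N) < \<infinity>" if \<omega>: "\<omega> \<in> space \<Omega>" for \<omega> N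
  proof -
    have int: "integrable (\<mu> \<omega>) (\<lambda>x. real (Suc N) * (\<Sum>n<N. (f n x)\<^sup>2))"
      using fL2[OF \<omega>] by (auto simp: L2_def)
    have TN: "T N \<in> sets (\<mu> \<omega>)" using sets_mu[OF \<omega>] Tm by simp
    have "emeasure (\<mu> \<omega>) (T N) = \<integral>\<^sup>+x. indicator (T N) x \<partial>\<mu> \<omega>" using TN by simp
    also have "\<dots> \<le> \<integral>\<^sup>+x. ennreal (real (Suc N) * (\<Sum>n<N. (f n x)\<^sup>2)) \<partial>\<mu> \<omega>"
    proof (intro nn_integral_mono)
      fix x
      show "indicator (T N) x \<le> ennreal (real (Suc N) * (\<Sum>n<N. (f n x)\<^sup>2))"
      proof (cases "x \<in> T N")
        case True
        then obtain n where n: "n < N" "1 \<le> real (Suc N) * (f n x)\<^sup>2" by (auto simp: T_def)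
        have "(f n x)\<^sup>2 \<le> (\<Sum>n<N. (f n x)\<^sup>2)" using n(1) by (intro member_le_sum) auto
        then have "real (Suc N) * (f n x)\<^sup>2 \<le> real (Suc N) * (\<Sum>n<N. (f n x)\<^sup>2)"
          by (intro mult_left_mono) auto
        with n(2) have "1 \<le> real (Suc N) * (\<Sum>n<N. (f n x)\<^sup>2)" by linarith
        with True show ?thesis by (simp add: indicator_def del: of_nat_Suc)
      qed (simp add: indicator_def)
    qed
    also have "\<dots> = ennreal (\<integral>x. real (Suc N) * (\<Sum>n<N. (f n x)\<^sup>2) \<partial>\<mu> \<omega>)"
      by (rule nn_integral_eq_integral[OF int]) (simp add: sum_nonneg)
    also have "\<dots> < \<infinity>" by simp
    finally show ?thesis .
  qed
  have Sae: "AE x in \<mu> \<omega>. x \<notin> (\<Union>N. T N) \<longrightarrow> ennreal ((g (x, \<omega>) - sumf qs x)\<^sup>2) = 0"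
    if \<omega>: "\<omega> \<in> space \<Omega>" for \<omega> qs
    using zero_off[OF totmu[OF \<omega>] gL2[OF \<omega>]] AE_space
  proof eventually_elim
    case (elim x)
    have xX: "x \<in> space X" using elim sets_eq_imp_space_eq[OF sets_mu[OF \<omega>]] by simp
    show ?case
    proof
      assume nx: "x \<notin> (\<Union>N. T N)"
      have f0: "f n x = 0" for n
      proof (rule ccontr)
        assume "f n x \<noteq> 0"
        then have p: "0 < (f n x)\<^sup>2" by simp
        obtain N0 :: nat where N0: "1 / (f n x)\<^sup>2 \<le> real N0" using real_arch_simple by blast
        define N where "N = max N0 (Suc n)"
        have "1 / (f n x)\<^sup>2 \<le> real (Suc N)" using N0 unfolding N_def by simp
        then have "1 \<le> real (Suc N) * (f n x)\<^sup>2" using p by (simp add: divide_le_eq)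
        moreover have "n < N" unfolding N_def by simp
        ultimately have "x \<in> T N" using xX unfolding T_def by blast
        with nx show False by blast
      qed
      then show "ennreal ((g (x, \<omega>) - sumf qs x)\<^sup>2) = 0"
        using elim f0 by (simp add: sumf_def)
    qed
  qed
  have Imeas[measurable]: "(\<lambda>\<omega>. I \<omega> qs) \<in> borel_measurable \<Omega>" for qs
  proof -
    have phi: "(\<lambda>(x,\<omega>). ennreal ((g (x, \<omega>) - sumf qs x)\<^sup>2)) \<in> borel_measurable (X \<Otimes>\<^sub>M \<Omega>)"
      unfolding sumf_def by measurable
    have "(\<lambda>\<omega>. SUP N. \<integral>\<^sup>+x. ennreal ((g (x, \<omega>) - sumf qs x)\<^sup>2) * indicator (T N) x \<partial>\<mu> \<omega>) \<in> borel_measurable \<Omega>"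
    proof (intro borel_measurable_SUP)
      fix N
      show "(\<lambda>\<omega>. \<integral>\<^sup>+x. ennreal ((g (x, \<omega>) - sumf qs x)\<^sup>2) * indicator (T N) x \<partial>\<mu> \<omega>) \<in> borel_measurable \<Omega>"
        by (rule kernel_restrict_meas[where X=X and \<phi>="\<lambda>x \<omega>. ennreal ((g (x, \<omega>) - sumf qs x)\<^sup>2)",
              OF sets_mu meas_mu Tm Tfin phi])
    qed simp
    then show ?thesis
    proof (rule measurable_cong[THEN iffD1, rotated])
      fix \<omega> assume \<omega>: "\<omega> \<in> space \<Omega>"
      have "(\<lambda>x. ennreal ((g (x, \<omega>) - sumf qs x)\<^sup>2)) \<in> borel_measurable X"
        using \<omega> unfolding sumf_def by measurable
      then have pm: "(\<lambda>x. ennreal ((g (x, \<omega>) - sumf qs x)\<^sup>2)) \<in> borel_measurable (\<mu> \<omega>)"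
        by (simp add: measurable_cong_sets[OF sets_mu[OF \<omega>] refl])
      have "I \<omega> qs = (SUP N. \<integral>\<^sup>+x. ennreal ((g (x, \<omega>) - sumf qs x)\<^sup>2) * indicator (T N) x \<partial>\<mu> \<omega>)"
        unfolding I_def
        by (rule nn_integral_SUP_restrict[OF Tinc _ pm Sae[OF \<omega>]]) (use sets_mu[OF \<omega>] in simp)
      then show "(SUP N. \<integral>\<^sup>+x. ennreal ((g (x, \<omega>) - sumf qs x)\<^sup>2) * indicator (T N) x \<partial>\<mu> \<omega>) = I \<omega> qs"
        by simp
    qed
  qed
  have ex: "\<exists>qs. I \<omega> qs < ennreal ((1/2)^m)" if \<omega>: "\<omega> \<in> space \<Omega>" for \<omega> m
    using rat_approx[OF totmu[OF \<omega>] gL2[OF \<omega>], of "(1/2)^m"] unfolding I_def sumf_def by simp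
  define J where "J m \<omega> = (LEAST j. I \<omega> (from_nat j) < ennreal ((1/2)^m))" for m \<omega>
  define sel where "sel m \<omega> = (from_nat (J m \<omega>) :: rat list)" for m \<omega>
  have selgood: "I \<omega> (sel m \<omega>) < ennreal ((1/2)^m)" if \<omega>: "\<omega> \<in> space \<Omega>" for \<omega> m
  proof -
    obtain qs where "I \<omega> qs < ennreal ((1/2)^m)" using ex[OF \<omega>] by blast
    then have "I \<omega> (from_nat (to_nat qs)) < ennreal ((1/2)^m)" by simp
    then show ?thesis unfolding sel_def J_def by (rule LeastI)
  qed
  have Jm[measurable]: "J m \<in> measurable \<Omega> (count_space UNIV)" for m
    unfolding J_def by measurable
  define H where "H m p = (\<Sum>i<length (sel m (snd p)). real_of_rat (sel m (snd p) ! i) * hh i p)" for m p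
  have Hm[measurable]: "H m \<in> borel_measurable (Y \<Otimes>\<^sub>M \<Omega>)" for m
    unfolding H_def sel_def
    by (rule measurable_compose_countable[where
          f="\<lambda>j p. \<Sum>i<length (from_nat j :: rat list). real_of_rat ((from_nat j :: rat list) ! i) * hh i p"])
      measurable
  have conv: "AE y in \<nu> \<omega>. (\<lambda>m. H m (y, \<omega>)) \<longlonglongrightarrow> A \<omega> (\<lambda>x. g (x, \<omega>)) y"
    if \<omega>: "\<omega> \<in> space \<Omega>" for \<omega>
  proof -
    obtain C where C: "\<forall>f. L2 (\<mu> \<omega>) f \<longrightarrow> L2norm (\<nu> \<omega>) (A \<omega> f) \<le> C * L2norm (\<mu> \<omega>) f"
      using bl_bound[OF bl[OF \<omega>]] by blast
    have AgL2: "L2 (\<nu> \<omega>) (A \<omega> (\<lambda>x. g (x, \<omega>)))" by (rule bl_L2[OF bl[OF \<omega>] gL2[OF \<omega>]])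
    have Hm': "(\<lambda>y. H m (y, \<omega>)) \<in> borel_measurable (\<nu> \<omega>)" for m
    proof -
      have "(\<lambda>y. H m (y, \<omega>)) \<in> borel_measurable Y" using \<omega> by measurable
      then show ?thesis by (simp add: measurable_cong_sets[OF sets_nu[OF \<omega>] refl])
    qed
    have Agm: "A \<omega> (\<lambda>x. g (x, \<omega>)) \<in> borel_measurable (\<nu> \<omega>)" using AgL2 by (simp add: L2_def)
    have bnd: "(\<integral>\<^sup>+y. ennreal ((H m (y, \<omega>) - A \<omega> (\<lambda>x. g (x, \<omega>)) y)\<^sup>2) \<partial>\<nu> \<omega>) \<le> ennreal (C\<^sup>2 * (1/2)^m)" for m
    proof (rule op_bound[where n="length (sel m \<omega>)" and c="\<lambda>i. real_of_rat (sel m \<omega> ! i)",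
          OF bl[OF \<omega>] fL2[OF \<omega>] gL2[OF \<omega>] C])
      have "AE y in \<nu> \<omega>. \<forall>i. hh i (y, \<omega>) = A \<omega> (f i) y" using hhae[OF \<omega>] by (simp add: AE_all_countable)
      then show "AE y in \<nu> \<omega>. H m (y, \<omega>) = (\<Sum>i<length (sel m \<omega>). real_of_rat (sel m \<omega> ! i) * A \<omega> (f i) y)"
        by eventually_elim (simp add: H_def)
      show "(\<integral>\<^sup>+x. ennreal ((g (x, \<omega>) - (\<Sum>i<length (sel m \<omega>). real_of_rat (sel m \<omega> ! i) * f i x))\<^sup>2) \<partial>\<mu> \<omega>) < ennreal ((1/2)^m)"
        using selgood[OF \<omega>, of m] unfolding I_def sumf_def .
    qed
    show ?thesis
      by (rule conv_ae[where K="C\<^sup>2", OF Hm' Agm _ bnd]) simp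
  qed
  show "realizable \<Omega> Y \<nu> (\<lambda>\<omega>. A \<omega> (\<lambda>x. g (x, \<omega>)))"
    unfolding realizable_def
  proof (intro bexI ballI)
    show "(\<lambda>p. lim (\<lambda>m. H m p)) \<in> borel_measurable (Y \<Otimes>\<^sub>M \<Omega>)" by measurable
    fix \<omega> assume \<omega>: "\<omega> \<in> space \<Omega>"
    show "AE y in \<nu> \<omega>. lim (\<lambda>m. H m (y, \<omega>)) = A \<omega> (\<lambda>x. g (x, \<omega>)) y"
      using conv[OF \<omega>] by eventually_elim (rule limI)
  qed
qed

end
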